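(* Let $p(n)=\sum_{k=0}^d a_k n^k$ be a polynomial with real coefficients $a_0,\ldots,a_d$, and let $p_k(n)=a_k n^k$ denote its terms. Then the sequence $\{p(n)\bmod 1\}_{n\ge0}$ in $\mathbb{T}$ has the repetition property if and only if the sequences $\{p_k(n)\bmod 1\}_{n\ge0}$, $0\le k\le d$, have the joint repetition property.
   Context: $\mathbb{T}=\mathbb{R}/\mathbb{Z}$ with metric $\mathrm{dist}(x,y)=\langle x-y\rangle$, where $\langle\tau\rangle=\min\{|\hat\tau-p|:p\in\mathbb{Z}\}$ for any representative $\hat\tau\in\mathbb{R}$ of $\tau$. $\mathbb{Z}_+=\{1,2,\ldots\}$. A sequence $\{\omega_n\}_{n\ge0}$ in a metric space $\Omega$ has the repetition property if for every $\varepsilon>0$ and $r \in \mathbb{Z}_+$ there exists $q \in \mathbb{Z}_+$ such that $\mathrm{dist}(\omega_n,\omega_{n+q}) < \varepsilon$ for $n = 0,1,\ldots, rq$. A family of sequences has the joint repetition property if each of them has the repetition property and, for each finite subfamily and each $\varepsilon>0$, $r\in\mathbb{Z}_+$, a single $q\in\mathbb{Z}_+$ can be chosen that works simultaneously for all sequences in the subfamily. *)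

theory Defs
  imports "HOL-Analysis.Analysis"
begin

text \<open>Points of the torus T = R/Z are represented by real representatives.
  tnorm t is the distance from t to the nearest integer, i.e. the paper's
  angle-bracket norm; the torus metric is tdist x y = tnorm (x - y),
  which depends only on the classes of x and y mod 1.\<close>

definition tnorm :: "real \<Rightarrow> real" where
  "tnorm t = (INF p\<in>(\<int>::real set). \<bar>t - p\<bar>)"

definition tdist :: "real \<Rightarrow> real \<Rightarrow> real" where
  "tdist x y = tnorm (x - y)"

definition repetition_property :: "(nat \<Rightarrow> real) \<Rightarrow> bool" where
  "repetition_property w \<longleftrightarrow>
     (\<forall>\<epsilon>>0. \<forall>r::nat. r \<ge> 1 \<longrightarrow>
        (\<exists>q::nat. q \<ge> 1 \<and> (\<forall>n\<in>{0..r*q}. tdist (w n) (w (n + q)) < \<epsilon>)))"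

definition joint_repetition_property :: "'i set \<Rightarrow> ('i \<Rightarrow> nat \<Rightarrow> real) \<Rightarrow> bool" where
  "joint_repetition_property I w \<longleftrightarrow>
     (\<forall>i\<in>I. repetition_property (w i)) \<and>
     (\<forall>F. F \<subseteq> I \<longrightarrow> finite F \<longrightarrow>
        (\<forall>\<epsilon>>0. \<forall>r::nat. r \<ge> 1 \<longrightarrow>
          (\<exists>q::nat. q \<ge> 1 \<and> (\<forall>i\<in>F. \<forall>n\<in>{0..r*q}. tdist (w i n) (w i (n + q)) < \<epsilon>))))"

end

theory Submission
  imports Defs
begin

lemma tnorm_round: "tnorm t = \<bar>t - of_int (round t)\<bar>"
proof -
  have min: "\<bar>t - of_int (round t)\<bar> \<le> \<bar>t - of_int m\<bar>" for m :: int
  proof (cases "m = round t")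
    case False
    then have i: "1 \<le> \<bar>m - round t\<bar>" by linarith
    have "(1::real) \<le> of_int \<bar>m - round t\<bar>"
      using i by simp
    then have "\<bar>of_int m - of_int (round t)\<bar> \<ge> (1::real)" by simp
    moreover have "\<bar>of_int (round t) - t\<bar> \<le> 1/2" by (rule of_int_round_abs_le)
    ultimately show ?thesis by linarith
  qed simp
  have "tnorm t = (INF p\<in>(\<int>::real set). \<bar>t - p\<bar>)" by (simp add: tnorm_def)
  also have "\<dots> = \<bar>t - of_int (round t)\<bar>"
  proof (rule antisym)
    show "(INF p\<in>(\<int>::real set). \<bar>t - p\<bar>) \<le> \<bar>t - of_int (round t)\<bar>"
      by (rule cINF_lower) (auto intro: bdd_belowI[of _ 0])
    show "\<bar>t - of_int (round t)\<bar> \<le> (INF p\<in>(\<int>::real set). \<bar>t - p\<bar>)"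
      by (rule cINF_greatest) (auto elim!: Ints_cases simp: min)
  qed
  finally show ?thesis .
qed

lemma tnorm_le: "tnorm t \<le> \<bar>t - of_int m\<bar>"
proof -
  have "tnorm t = (INF p\<in>(\<int>::real set). \<bar>t - p\<bar>)" by (simp add: tnorm_def)
  also have "\<dots> \<le> \<bar>t - of_int m\<bar>"
    by (rule cINF_lower) (auto intro: bdd_belowI[of _ 0])
  finally show ?thesis .
qed

lemma tnorm_nonneg: "tnorm t \<ge> 0"
  by (simp add: tnorm_round)

lemma tnorm_abs: "tnorm t \<le> \<bar>t\<bar>"
  using tnorm_le[of t 0] by simp

lemma tnorm_add: "tnorm (x + y) \<le> tnorm x + tnorm y"
proof -
  have "tnorm (x + y) \<le> \<bar>x + y - of_int (round x + round y)\<bar>" by (rule tnorm_le)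
  also have "\<dots> \<le> \<bar>x - of_int (round x)\<bar> + \<bar>y - of_int (round y)\<bar>" by simp
  finally show ?thesis by (simp add: tnorm_round)
qed

lemma tnorm_minus: "tnorm (- x) = tnorm x"
proof -
  have "tnorm (-x) \<le> tnorm x" for x
  proof -
    have "tnorm (-x) \<le> \<bar>-x - of_int (- round x)\<bar>" by (rule tnorm_le)
    then show ?thesis by (simp add: tnorm_round abs_minus_commute)
  qed
  from this[of x] this[of "-x"] show ?thesis by simp
qed

lemma tnorm_diff: "tnorm (x - y) \<le> tnorm x + tnorm y"
  using tnorm_add[of x "-y"] by (simp add: tnorm_minus)

lemma tnorm_commute: "tnorm (x - y) = tnorm (y - x)"
  using tnorm_minus[of "x - y"] by simp

lemma tnorm_int_add: "tnorm (x + of_int m) = tnorm x"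
proof -
  have "tnorm (x + of_int m) \<le> tnorm x" for x m
  proof -
    have "tnorm (x + of_int m) \<le> \<bar>x + of_int m - of_int (round x + m)\<bar>" by (rule tnorm_le)
    then show ?thesis by (simp add: tnorm_round)
  qed
  from this[of x m] this[of "x + of_int m" "-m"] show ?thesis by simp
qed

lemma tnorm_small: "\<bar>x\<bar> < 1/2 \<Longrightarrow> tnorm x = \<bar>x\<bar>"
proof -
  assume a: "\<bar>x\<bar> < 1/2"
  have "\<bar>x\<bar> \<le> \<bar>x - of_int (round x)\<bar>"
  proof (cases "round x = 0")
    case False
    then have i: "1 \<le> \<bar>round x\<bar>" by linarith
    have "(1::real) \<le> of_int \<bar>round x\<bar>"
      using i by simp
    then have "\<bar>of_int (round x)\<bar> \<ge> (1::real)" by simp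
    then show ?thesis using a by linarith
  qed simp
  then show ?thesis using tnorm_abs[of x] by (simp add: tnorm_round)
qed

lemma tnorm_mult_nat: "tnorm (of_nat m * x) \<le> of_nat m * tnorm x"
proof (induction m)
  case 0 then show ?case by (simp add: tnorm_round)
next
  case (Suc m)
  have "tnorm (of_nat (Suc m) * x) = tnorm (of_nat m * x + x)" by (simp add: algebra_simps)
  also have "\<dots> \<le> tnorm (of_nat m * x) + tnorm x" by (rule tnorm_add)
  finally show ?case using Suc by (simp add: algebra_simps)
qed

lemma tnorm_sum: "tnorm (\<Sum>i\<in>A. f i) \<le> (\<Sum>i\<in>A. tnorm (f i))"
proof (induction A rule: infinite_finite_induct)
  case (infinite A) then show ?case by (simp add: tnorm_round)
next
  case empty then show ?case by (simp add: tnorm_round)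
next
  case (insert x F)
  then show ?case using tnorm_add[of "f x" "sum f F"] by simp
qed

definition rdiff :: "real \<Rightarrow> (real \<Rightarrow> real) \<Rightarrow> real \<Rightarrow> real" where
  "rdiff s h x = h (x + s) - h x"

definition polyf :: "nat \<Rightarrow> real \<Rightarrow> (real \<Rightarrow> real) \<Rightarrow> bool" where
  "polyf j b h \<longleftrightarrow> (\<exists>c. c j = b \<and> (\<forall>x. h x = (\<Sum>i\<le>j. c i * x ^ i)))"

lemma binom_diff:
  fixes x s :: real
  shows "(x + s) ^ i - x ^ i = (\<Sum>l<i. of_nat (i choose l) * x ^ l * s ^ (i - l))"
proof -
  have "(x + s) ^ i = (\<Sum>l\<le>i. of_nat (i choose l) * x ^ l * s ^ (i - l))"
    by (rule binomial_ring)
  also have "\<dots> = (\<Sum>l<Suc i. of_nat (i choose l) * x ^ l * s ^ (i - l))"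
    by (simp only: lessThan_Suc_atMost)
  also have "\<dots> = (\<Sum>l<i. of_nat (i choose l) * x ^ l * s ^ (i - l)) + x ^ i"
    by simp
  finally show ?thesis by simp
qed

lemma binom_sum_diff:
  fixes c :: "nat \<Rightarrow> real"
  shows "(\<Sum>i\<le>Suc j. c i * ((x + s) ^ i - x ^ i)) = (\<Sum>i\<le>Suc j. \<Sum>l<i. c i * of_nat (i choose l) * s ^ (i - l) * x ^ l)"
proof (rule sum.cong[OF refl])
  fix i
  show "c i * ((x + s) ^ i - x ^ i) = (\<Sum>l<i. c i * of_nat (i choose l) * s ^ (i - l) * x ^ l)"
    unfolding binom_diff sum_distrib_left
    by (rule sum.cong[OF refl]) (simp only: ac_simps)
qed

lemma polyf_diff:
  assumes "polyf (Suc j) b h"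
  shows "polyf j (real (Suc j) * b * s) (rdiff s h)"
proof -
  obtain c where c1: "c (Suc j) = b" and c2: "\<And>x. h x = (\<Sum>i\<le>Suc j. c i * x ^ i)"
    using assms unfolding polyf_def by blast
  define c' where "c' l = (\<Sum>i=Suc l..Suc j. c i * of_nat (i choose l) * s ^ (i - l))" for l
  have "c' j = real (Suc j) * b * s"
    by (simp add: c'_def c1)
  moreover have "rdiff s h x = (\<Sum>l\<le>j. c' l * x ^ l)" for x
  proof -
    have "rdiff s h x = (\<Sum>i\<le>Suc j. c i * (x + s) ^ i) - (\<Sum>i\<le>Suc j. c i * x ^ i)"
      by (simp only: rdiff_def c2)
    also have "\<dots> = (\<Sum>i\<le>Suc j. c i * (x + s) ^ i - c i * x ^ i)"
      by (simp only: sum_subtractf)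
    also have "\<dots> = (\<Sum>i\<le>Suc j. c i * ((x + s) ^ i - x ^ i))"
      by (simp only: right_diff_distrib)
    also have "\<dots> = (\<Sum>i\<le>Suc j. \<Sum>l<i. c i * of_nat (i choose l) * s ^ (i - l) * x ^ l)"
      by (rule binom_sum_diff)
    also have "\<dots> = (\<Sum>l<Suc j. \<Sum>i=Suc l..Suc j. c i * of_nat (i choose l) * s ^ (i - l) * x ^ l)"
      by (rule sum.nested_swap')
    also have "\<dots> = (\<Sum>l\<le>j. c' l * x ^ l)"
      by (simp only: c'_def sum_distrib_right lessThan_Suc_atMost)
    finally show ?thesis .
  qed
  ultimately show ?thesis unfolding polyf_def by blast
qed

lemma polyf_iter:
  assumes "polyf k b h" "i \<le> k"
  shows "polyf (k - i) (b * s ^ i * fact k / fact (k - i)) ((rdiff s ^^ i) h)"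
  using assms(2)
proof (induction i)
  case 0
  then show ?case using assms(1) by simp
next
  case (Suc i)
  then have ki: "k - i = Suc (k - Suc i)" by simp
  have "polyf (k - i) (b * s ^ i * fact k / fact (k - i)) ((rdiff s ^^ i) h)"
    using Suc.IH Suc.prems by simp
  then have "polyf (Suc (k - Suc i)) (b * s ^ i * fact k / fact (k - i)) ((rdiff s ^^ i) h)"
    by (simp only: ki)
  from polyf_diff[OF this, of s]
  have P: "polyf (k - Suc i) (real (Suc (k - Suc i)) * (b * s ^ i * fact k / fact (k - i)) * s)
          ((rdiff s ^^ Suc i) h)" by simp
  have eq: "real (Suc (k - Suc i)) * (b * s ^ i * fact k / fact (k - i)) * s
      = b * s ^ Suc i * fact k / fact (k - Suc i)"
  proof -
    have f: "fact (k - i) = real (Suc (k - Suc i)) * (fact (k - Suc i) :: real)"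
      by (simp only: ki fact_Suc)
    have aux: "(m::real) > 0 \<Longrightarrow> G \<noteq> 0 \<Longrightarrow> m * (X / (m * G)) * s = X * s / G" for m G X
      by (simp add: field_simps)
    have "real (Suc (k - Suc i)) * (b * s ^ i * fact k / (real (Suc (k - Suc i)) * fact (k - Suc i))) * s
        = b * s ^ i * fact k * s / fact (k - Suc i)"
      by (rule aux) auto
    also have "b * s ^ i * fact k * s = b * s ^ Suc i * fact k"
      by (simp only: power_Suc mult_ac)
    finally show ?thesis unfolding f .
  qed
  show ?case using P unfolding eq .
qed

lemma polyf0: "polyf 0 b h \<Longrightarrow> h x = b"
  unfolding polyf_def by auto

lemma diff_const:
  assumes "polyf k b h"
  shows "(rdiff s ^^ k) h x = b * s ^ k * fact k"
proof -
  have "polyf 0 (b * s ^ k * fact k) ((rdiff s ^^ k) h)"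
    using polyf_iter[OF assms order_refl, of s] by simp
  then show ?thesis by (rule polyf0)
qed

lemma tnorm_iter:
  assumes "\<And>m. m \<le> M \<Longrightarrow> tnorm (f (real m)) \<le> \<delta>"
  shows "n + i * s \<le> M \<Longrightarrow> tnorm ((rdiff (real s) ^^ i) f (real n)) \<le> 2 ^ i * \<delta>"
proof (induction i arbitrary: n)
  case 0
  then show ?case using assms by simp
next
  case (Suc i)
  have a: "tnorm ((rdiff (real s) ^^ i) f (real (n + s))) \<le> 2 ^ i * \<delta>"
    using Suc.IH[of "n + s"] Suc.prems by (simp add: algebra_simps)
  have b: "tnorm ((rdiff (real s) ^^ i) f (real n)) \<le> 2 ^ i * \<delta>"
    using Suc.IH[of n] Suc.prems by simp
  have "(rdiff (real s) ^^ Suc i) f (real n)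
      = (rdiff (real s) ^^ i) f (real (n + s)) - (rdiff (real s) ^^ i) f (real n)"
    by (simp add: rdiff_def)
  then have "tnorm ((rdiff (real s) ^^ Suc i) f (real n))
      \<le> tnorm ((rdiff (real s) ^^ i) f (real (n + s))) + tnorm ((rdiff (real s) ^^ i) f (real n))"
    using tnorm_diff by simp
  then show ?case using a b by simp
qed

lemma pow_step:
  fixes x :: real
  assumes "x \<ge> 0"
  shows "(x + 1) ^ Suc j - x ^ Suc j \<le> real (Suc j) * (x + 1) ^ j"
proof -
  have "(x + 1) ^ Suc j - x ^ Suc j = ((x + 1) - x) * (\<Sum>i<Suc j. x ^ (Suc j - Suc i) * (x + 1) ^ i)"
    by (rule power_diff_sumr2)
  also have "\<dots> = (\<Sum>i<Suc j. x ^ (j - i) * (x + 1) ^ i)" by simp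
  also have "\<dots> \<le> of_nat (card {..<Suc j}) * (x + 1) ^ j"
  proof (rule sum_bounded_above)
    fix i assume "i \<in> {..<Suc j}"
    then have ij: "i \<le> j" by simp
    have "x ^ (j - i) \<le> (x + 1) ^ (j - i)"
      using assms by (intro power_mono) auto
    then have "x ^ (j - i) * (x + 1) ^ i \<le> (x + 1) ^ (j - i) * (x + 1) ^ i"
      using assms by (intro mult_right_mono) auto
    also have "\<dots> = (x + 1) ^ j"
      using ij by (simp add: power_add[symmetric])
    finally show "x ^ (j - i) * (x + 1) ^ i \<le> (x + 1) ^ j" .
  qed
  also have "\<dots> = real (Suc j) * (x + 1) ^ j" by simp
  finally show ?thesis .
qed

lemma lemL:
  "\<exists>C>0. \<exists>c>0. \<forall>h b N \<delta>. polyf j b h \<longrightarrow> (\<forall>n\<le>N. tnorm (h (real n)) \<le> \<delta>) \<longrightarrow>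
      \<delta> \<le> c \<longrightarrow> j \<le> N \<longrightarrow> tnorm (fact j * b) * real N ^ j \<le> C * \<delta>"
proof (induction j)
  case 0
  have "tnorm (fact 0 * b) * real N ^ 0 \<le> 1 * \<delta>"
    if "polyf 0 b h" "\<forall>n\<le>N. tnorm (h (real n)) \<le> \<delta>" for h b N \<delta>
  proof -
    have "h (real 0) = b" using polyf0[OF that(1)] .
    then show ?thesis using that(2) by auto
  qed
  then show ?case by (intro exI[of _ 1] conjI) auto
next
  case (Suc j)
  obtain C' c' where C'0: "C' > 0" and c'0: "c' > 0" and
    L: "\<And>h b N \<delta>. polyf j b h \<Longrightarrow> (\<forall>n\<le>N. tnorm (h (real n)) \<le> \<delta>) \<Longrightarrow>
      \<delta> \<le> c' \<Longrightarrow> j \<le> N \<Longrightarrow> tnorm (fact j * b) * real N ^ j \<le> C' * \<delta>"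
    using Suc.IH by blast
  define J where "J = Suc j"
  define K where "K = 4 * (2 ^ J + 2 * real J * C')"
  have K0: "K > 0" unfolding K_def using C'0 by (simp add: add_pos_nonneg)
  define c where "c = min (c' / 2) (1 / K)"
  define C where "C = (2 * real J) ^ J * 2 ^ J"
  have c0: "c > 0" unfolding c_def using c'0 K0 by simp
  have C0: "C > 0" unfolding C_def J_def by simp
  have main: "tnorm (fact J * b) * real N ^ J \<le> C * \<delta>"
    if hp: "polyf J b h" and hb: "\<forall>n\<le>N. tnorm (h (real n)) \<le> \<delta>" and hd: "\<delta> \<le> c"
      and hN: "J \<le> N" for h b N \<delta>
  proof -
    have d0: "0 \<le> \<delta>" using hb tnorm_nonneg[of "h (real 0)"] by force
    have hd1: "2 * \<delta> \<le> c'" using hd unfolding c_def by simp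
    have "\<delta> \<le> 1 / K" using hd unfolding c_def by simp
    then have hd2: "\<delta> * K \<le> 1" using K0 by (simp add: pos_le_divide_eq)
    have J1: "J \<ge> 1" unfolding J_def by simp
    have N1: "N \<ge> 1" using hN J1 by simp
    have p1: "polyf j (real (Suc j) * b * 1) (rdiff 1 h)"
      using polyf_diff[of j b h 1] hp unfolding J_def by simp
    have b1: "\<forall>n\<le>N - 1. tnorm (rdiff 1 h (real n)) \<le> 2 * \<delta>"
    proof (intro allI impI)
      fix n assume n: "n \<le> N - 1"
      have "rdiff 1 h (real n) = h (real (n + 1)) - h (real n)" by (simp add: rdiff_def add.commute)
      then have "tnorm (rdiff 1 h (real n)) \<le> tnorm (h (real (n + 1))) + tnorm (h (real n))"
        using tnorm_diff[of "h (real (n + 1))" "h (real n)"] by simp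
      moreover have "tnorm (h (real (n + 1))) \<le> \<delta>"
      proof -
        have "n + 1 \<le> N" using n N1 by simp
        then show ?thesis by (rule hb[rule_format])
      qed
      moreover have "tnorm (h (real n)) \<le> \<delta>" using hb n N1 by simp
      ultimately show "tnorm (rdiff 1 h (real n)) \<le> 2 * \<delta>" by simp
    qed
    have jN: "j \<le> N - 1" using hN unfolding J_def by simp
    have IH1: "tnorm (fact j * (real (Suc j) * b * 1)) * real (N - 1) ^ j \<le> C' * (2 * \<delta>)"
      using L[OF p1 b1 hd1 jN] .
    define u where "u = fact J * b"
    have "fact j * (real (Suc j) * b * 1) = u" unfolding u_def J_def by (simp add: fact_Suc)
    with IH1 have hU: "tnorm u * real (N - 1) ^ j \<le> C' * (2 * \<delta>)" by simp
    define S where "S = N div J"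
    have JS: "J * S \<le> N" unfolding S_def by simp
    have NS: "N < J * (S + 1)"
    proof -
      have "N = J * S + N mod J" unfolding S_def by simp
      moreover have "N mod J < J" using J1 by simp
      ultimately show ?thesis by (simp add: algebra_simps)
    qed
    have S1: "S \<ge> 1" using NS hN by (cases S) auto
    have hs: "tnorm (u * real s ^ J) \<le> 2 ^ J * \<delta>" if s: "s \<le> S" for s
    proof -
      have "(rdiff (real s) ^^ J) h (real 0) = b * real s ^ J * fact J"
        by (rule diff_const[OF hp])
      moreover have "tnorm ((rdiff (real s) ^^ J) h (real 0)) \<le> 2 ^ J * \<delta>"
      proof (rule tnorm_iter[of N h \<delta> 0 J s])
        show "\<And>m. m \<le> N \<Longrightarrow> tnorm (h (real m)) \<le> \<delta>" using hb by simp
        have "J * s \<le> J * S" using s by simp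
        then have "J * s \<le> N" using JS by (rule order_trans)
        then show "0 + J * s \<le> N" by simp
      qed
      ultimately show ?thesis unfolding u_def by (simp add: mult_ac)
    qed
    define e where "e = u - of_int (round u)"
    have ae: "\<bar>e\<bar> = tnorm u" unfolding e_def by (simp add: tnorm_round)
    have he: "tnorm (e * real s ^ J) \<le> 2 ^ J * \<delta>" if s: "s \<le> S" for s
    proof -
      have eq: "e * real s ^ J = u * real s ^ J + of_int (- round u * int s ^ J)"
        unfolding e_def by (simp add: algebra_simps)
      have "tnorm (e * real s ^ J) = tnorm (u * real s ^ J + of_int (- round u * int s ^ J))"
        by (simp only: eq)
      also have "\<dots> = tnorm (u * real s ^ J)" by (rule tnorm_int_add)
      finally have "tnorm (e * real s ^ J) = tnorm (u * real s ^ J)" .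
      then show ?thesis using hs[OF s] by simp
    qed
    have SN: "real S ^ j \<le> real (N - 1) ^ j"
    proof (cases "j = 0")
      case False
      then have "J \<ge> 2" unfolding J_def by simp
      then have "S \<le> N div 2" unfolding S_def by (intro div_le_mono2) auto
      also have "N div 2 < N" using N1 by simp
      finally have "S \<le> N - 1" by simp
      then show ?thesis by (intro power_mono) auto
    qed simp
    have hE: "\<bar>e\<bar> * real S ^ j \<le> C' * (2 * \<delta>)"
    proof -
      have "\<bar>e\<bar> * real S ^ j \<le> \<bar>e\<bar> * real (N - 1) ^ j"
        using SN by (intro mult_left_mono) auto
      then show ?thesis using hU ae by simp
    qed
    have lift: "s \<le> S \<longrightarrow> \<bar>e * real s ^ J\<bar> \<le> 2 ^ J * \<delta>" for s
    proof (induction s)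
      case 0
      have "0 < J" using J1 by simp
      then show ?case using d0 by (simp add: zero_power)
    next
      case (Suc s)
      show ?case
      proof
        assume sS: "Suc s \<le> S"
        then have ih: "\<bar>e * real s ^ J\<bar> \<le> 2 ^ J * \<delta>" using Suc.IH by simp
        define inc where "inc = real (Suc s) ^ J - real s ^ J"
        have inc0: "inc \<ge> 0" unfolding inc_def by (simp add: power_mono)
        have "inc \<le> real J * (real s + 1) ^ j"
          using pow_step[of "real s" j] unfolding inc_def J_def by (simp add: add.commute)
        also have "\<dots> \<le> real J * real S ^ j"
        proof -
          have "(real s + 1) ^ j \<le> real S ^ j" using sS by (intro power_mono) auto
          then show ?thesis by (intro mult_left_mono) auto
        qed
        finally have incb: "inc \<le> real J * real S ^ j" .
        have "\<bar>e\<bar> * inc \<le> \<bar>e\<bar> * (real J * real S ^ j)"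
          using incb by (intro mult_left_mono) auto
        also have "\<dots> = real J * (\<bar>e\<bar> * real S ^ j)" by simp
        also have "\<dots> \<le> real J * (C' * (2 * \<delta>))"
          using hE by (intro mult_left_mono) auto
        finally have ei: "\<bar>e\<bar> * inc \<le> real J * (C' * (2 * \<delta>))" .
        have "e * real (Suc s) ^ J = e * real s ^ J + e * inc" unfolding inc_def by (simp add: algebra_simps)
        then have "\<bar>e * real (Suc s) ^ J\<bar> \<le> \<bar>e * real s ^ J\<bar> + \<bar>e\<bar> * inc"
          using inc0 by (simp add: abs_mult abs_triangle_ineq order_trans[OF abs_triangle_ineq])
        also have "\<dots> \<le> 2 ^ J * \<delta> + real J * (C' * (2 * \<delta>))" using ih ei by simp
        also have "\<dots> = \<delta> * K / 4" unfolding K_def by (simp add: algebra_simps)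
        also have "\<dots> < 1 / 2" using hd2 by (simp add: mult.commute)
        finally have "\<bar>e * real (Suc s) ^ J\<bar> < 1 / 2" .
        then have "tnorm (e * real (Suc s) ^ J) = \<bar>e * real (Suc s) ^ J\<bar>" by (rule tnorm_small)
        then show "\<bar>e * real (Suc s) ^ J\<bar> \<le> 2 ^ J * \<delta>" using he[OF sS] by simp
      qed
    qed
    have eS: "\<bar>e\<bar> * real S ^ J \<le> 2 ^ J * \<delta>"
      using lift[of S] by (simp add: abs_mult)
    have "J * (S + 1) \<le> J * (2 * S)" using S1 by (intro mult_le_mono2) simp
    then have "N \<le> J * (2 * S)" using NS by (meson less_imp_le order_less_le_trans)
    then have "N \<le> 2 * J * S" by (simp add: mult_ac)
    then have "real N \<le> 2 * real J * real S" by (metis of_nat_le_iff of_nat_mult of_nat_numeral)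
    then have "real N ^ J \<le> (2 * real J * real S) ^ J" by (intro power_mono) auto
    also have "\<dots> = (2 * real J) ^ J * real S ^ J" by (simp add: power_mult_distrib)
    finally have NJ: "real N ^ J \<le> (2 * real J) ^ J * real S ^ J" .
    have "tnorm u * real N ^ J = \<bar>e\<bar> * real N ^ J" using ae by simp
    also have "\<dots> \<le> \<bar>e\<bar> * ((2 * real J) ^ J * real S ^ J)" using NJ by (intro mult_left_mono) auto
    also have "\<dots> = (2 * real J) ^ J * (\<bar>e\<bar> * real S ^ J)" by simp
    also have "\<dots> \<le> (2 * real J) ^ J * (2 ^ J * \<delta>)" using eS by (intro mult_left_mono) auto
    also have "\<dots> = C * \<delta>" unfolding C_def by simp
    finally show ?thesis unfolding u_def .
  qed
  show ?case
    using C0 c0 main unfolding J_def by blast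
qed

definition Pf :: "(nat \<Rightarrow> real) \<Rightarrow> nat \<Rightarrow> real \<Rightarrow> real" where
  "Pf a d x = (\<Sum>k\<le>d. a k * x ^ k)"

definition G :: "real \<Rightarrow> nat \<Rightarrow> nat \<Rightarrow> nat \<Rightarrow> real \<Rightarrow> bool" where
  "G c k q r \<epsilon> \<longleftrightarrow> (\<forall>j<k. tnorm (c * real (k choose j) * real q ^ (k - j)) * (real r * real q) ^ j \<le> \<epsilon>)"

lemma polyf_Pf: "polyf d (a d) (Pf a d)"
  unfolding polyf_def Pf_def by blast

lemma G_mono_eps: "G c k q r \<epsilon> \<Longrightarrow> \<epsilon> \<le> \<epsilon>' \<Longrightarrow> G c k q r \<epsilon>'"
  unfolding G_def by force

lemma G_mono_r: "G c k q r' \<epsilon> \<Longrightarrow> r \<le> r' \<Longrightarrow> G c k q r \<epsilon>"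
  unfolding G_def
proof (intro allI impI)
  fix j assume g: "\<forall>j<k. tnorm (c * real (k choose j) * real q ^ (k - j)) * (real r' * real q) ^ j \<le> \<epsilon>"
    and rr: "r \<le> r'" and j: "j < k"
  have "(real r * real q) ^ j \<le> (real r' * real q) ^ j"
    using rr by (intro power_mono mult_right_mono) auto
  then have "tnorm (c * real (k choose j) * real q ^ (k - j)) * (real r * real q) ^ j
      \<le> tnorm (c * real (k choose j) * real q ^ (k - j)) * (real r' * real q) ^ j"
    by (intro mult_left_mono tnorm_nonneg)
  then show "tnorm (c * real (k choose j) * real q ^ (k - j)) * (real r * real q) ^ j \<le> \<epsilon>"
    using g j by force
qed

lemma G_mult:
  assumes "G c k q r \<epsilon>"
  shows "G c k (M * q) r (real M ^ k * \<epsilon>)"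
  unfolding G_def
proof (intro allI impI)
  fix j assume j: "j < k"
  define T where "T = tnorm (c * real (k choose j) * real q ^ (k - j))"
  have T: "T * (real r * real q) ^ j \<le> \<epsilon>" using assms j unfolding G_def T_def by blast
  have eq: "c * real (k choose j) * real (M * q) ^ (k - j) = real (M ^ (k - j)) * (c * real (k choose j) * real q ^ (k - j))"
    by (simp add: power_mult_distrib)
  have "tnorm (c * real (k choose j) * real (M * q) ^ (k - j)) = tnorm (real (M ^ (k - j)) * (c * real (k choose j) * real q ^ (k - j)))"
    by (simp only: eq)
  also have "\<dots> \<le> real (M ^ (k - j)) * T"
    unfolding T_def by (rule tnorm_mult_nat)
  finally have "tnorm (c * real (k choose j) * real (M * q) ^ (k - j)) \<le> real (M ^ (k - j)) * T" .
  then have "tnorm (c * real (k choose j) * real (M * q) ^ (k - j)) * (real r * real (M * q)) ^ j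
      \<le> real (M ^ (k - j)) * T * (real r * real (M * q)) ^ j"
    by (intro mult_right_mono) auto
  also have "\<dots> = real M ^ (k - j) * real M ^ j * (T * (real r * real q) ^ j)"
    by (simp add: power_mult_distrib)
  also have "real M ^ (k - j) * real M ^ j = real M ^ k"
    using j by (simp add: power_add[symmetric])
  also have "real M ^ k * (T * (real r * real q) ^ j) \<le> real M ^ k * \<epsilon>"
    using T by (intro mult_left_mono) auto
  finally show "tnorm (c * real (k choose j) * real (M * q) ^ (k - j)) * (real r * real (M * q)) ^ j
      \<le> real M ^ k * \<epsilon>" .
qed

lemma G_expand:
  assumes "G c k q r \<epsilon>" "n \<le> r * q"
  shows "tnorm (c * (real n + real q) ^ k - c * real n ^ k) \<le> real k * \<epsilon>"
proof -
  have "c * (real n + real q) ^ k - c * real n ^ k = c * ((real n + real q) ^ k - real n ^ k)"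
    by (simp add: algebra_simps)
  also have "\<dots> = (\<Sum>l<k. real (n ^ l) * (c * real (k choose l) * real q ^ (k - l)))"
    unfolding binom_diff sum_distrib_left by (rule sum.cong) (simp_all add: mult_ac)
  finally have eq: "c * (real n + real q) ^ k - c * real n ^ k
      = (\<Sum>l<k. real (n ^ l) * (c * real (k choose l) * real q ^ (k - l)))" .
  have "tnorm (c * (real n + real q) ^ k - c * real n ^ k)
      \<le> (\<Sum>l<k. tnorm (real (n ^ l) * (c * real (k choose l) * real q ^ (k - l))))"
    unfolding eq by (rule tnorm_sum)
  also have "\<dots> \<le> (\<Sum>l<k. \<epsilon>)"
  proof (rule sum_mono)
    fix l assume l: "l \<in> {..<k}"
    define T where "T = tnorm (c * real (k choose l) * real q ^ (k - l))"
    have T: "T * (real r * real q) ^ l \<le> \<epsilon>" using assms(1) l unfolding G_def T_def by blast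
    have "tnorm (real (n ^ l) * (c * real (k choose l) * real q ^ (k - l))) \<le> real (n ^ l) * T"
      unfolding T_def by (rule tnorm_mult_nat)
    also have "\<dots> \<le> (real r * real q) ^ l * T"
    proof (intro mult_right_mono)
      have "real n \<le> real r * real q" using assms(2) by (metis of_nat_le_iff of_nat_mult)
      then show "real (n ^ l) \<le> (real r * real q) ^ l" by (simp add: power_mono)
      show "0 \<le> T" unfolding T_def by (rule tnorm_nonneg)
    qed
    also have "\<dots> \<le> \<epsilon>" using T by (simp add: mult.commute)
    finally show "tnorm (real (n ^ l) * (c * real (k choose l) * real q ^ (k - l))) \<le> \<epsilon>" .
  qed
  also have "\<dots> = real k * \<epsilon>" by simp
  finally show ?thesis .
qed

lemma tele:
  "rdiff (real (m * q)) f x = (\<Sum>i<m. rdiff (real q) f (x + real (i * q)))"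
proof -
  define g where "g i = f (x + real (i * q))" for i
  have "(\<Sum>i<m. rdiff (real q) f (x + real (i * q))) = (\<Sum>i<m. g (Suc i) - g i)"
    unfolding g_def rdiff_def by (rule sum.cong) (simp_all add: algebra_simps)
  also have "\<dots> = g m - g 0" by (rule sum_lessThan_telescope)
  also have "\<dots> = rdiff (real (m * q)) f x" unfolding g_def rdiff_def by simp
  finally show ?thesis by simp
qed

lemma TT:
  assumes eps: "\<epsilon> > 0"
  shows "\<exists>\<eta>>0. \<forall>a q. q \<ge> 1 \<longrightarrow>
     (\<forall>n\<le>(2 * d + 1) * q. tnorm (rdiff (real q) (Pf a d) (real n)) \<le> \<eta>) \<longrightarrow>
     G (a d) d (fact d * q) r \<epsilon>"
proof -
  have "\<forall>j. \<exists>Cc::real \<times> real. fst Cc > 0 \<and> snd Cc > 0 \<and> (\<forall>h b N \<delta>. polyf j b h \<longrightarrow>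
      (\<forall>n\<le>N. tnorm (h (real n)) \<le> \<delta>) \<longrightarrow> \<delta> \<le> snd Cc \<longrightarrow> j \<le> N \<longrightarrow>
      tnorm (fact j * b) * real N ^ j \<le> fst Cc * \<delta>)"
  proof
    fix j
    obtain C c where "C > 0" "c > 0" "\<forall>h b N \<delta>. polyf j b h \<longrightarrow>
      (\<forall>n\<le>N. tnorm (h (real n)) \<le> \<delta>) \<longrightarrow> \<delta> \<le> c \<longrightarrow> j \<le> N \<longrightarrow>
      tnorm (fact j * b) * real N ^ j \<le> C * \<delta>"
      using lemL[of j] by blast
    then show "\<exists>Cc::real \<times> real. fst Cc > 0 \<and> snd Cc > 0 \<and> (\<forall>h b N \<delta>. polyf j b h \<longrightarrow>
      (\<forall>n\<le>N. tnorm (h (real n)) \<le> \<delta>) \<longrightarrow> \<delta> \<le> snd Cc \<longrightarrow> j \<le> N \<longrightarrow>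
      tnorm (fact j * b) * real N ^ j \<le> fst Cc * \<delta>)"
      by (intro exI[of _ "(C, c)"]) simp
  qed
  then obtain Cc where Cc: "\<And>j. fst (Cc j) > (0::real)" "\<And>j. snd (Cc j) > (0::real)"
    "\<And>j h b N \<delta>. polyf j b h \<Longrightarrow>
      (\<forall>n\<le>N. tnorm (h (real n)) \<le> \<delta>) \<Longrightarrow> \<delta> \<le> snd (Cc j) \<Longrightarrow> j \<le> N \<Longrightarrow>
      tnorm (fact j * b) * real N ^ j \<le> fst (Cc j) * \<delta>"
    by (metis choice)
  define Mn :: nat where "Mn = fact d"
  define K :: "nat \<Rightarrow> nat" where "K j = (d choose j) * Mn ^ (d - j - 1)" for j
  define B where "B = (\<Sum>j<d. real (K j) * (real r * real Mn) ^ j * fst (Cc j) * 2 ^ d)"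
  have B0: "B \<ge> 0" unfolding B_def using Cc(1)
    by (intro sum_nonneg mult_nonneg_nonneg zero_le_power) (auto intro: less_imp_le)
  define m where "m = Min (insert 1 ((\<lambda>j. snd (Cc j) / 2 ^ d) ` {..<d}))"
  have m0: "m > 0" unfolding m_def using Cc(2) by (subst Min_gr_iff) auto
  have mj: "m \<le> snd (Cc j) / 2 ^ d" if "j < d" for j
    unfolding m_def using that by (intro Min_le) auto
  define \<eta> where "\<eta> = min (\<epsilon> / (B + 1)) m"
  have \<eta>0: "\<eta> > 0" unfolding \<eta>_def using eps B0 m0 by simp
  have main: "G (a d) d (fact d * q) r \<epsilon>"
    if q1: "q \<ge> 1" and hyp: "\<forall>n\<le>(2 * d + 1) * q. tnorm (rdiff (real q) (Pf a d) (real n)) \<le> \<eta>" for a q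
    unfolding G_def
  proof (intro allI impI)
    fix j assume jd: "j < d"
    define i where "i = d - j"
    have i1: "i = Suc (i - 1)" unfolding i_def using jd by simp
    have dij: "d - i = j" unfolding i_def using jd by simp
    define N where "N = (d + 1) * q"
    define h where "h = (rdiff (real q) ^^ i) (Pf a d)"
    define X where "X = a d * real q ^ i * fact d"
    have ph: "polyf j (X / fact j) h"
      using polyf_iter[OF polyf_Pf[of d a], of i "real q"] unfolding h_def X_def dij
      using jd unfolding i_def by simp
    have hb: "\<forall>n\<le>N. tnorm (h (real n)) \<le> 2 ^ d * \<eta>"
    proof (intro allI impI)
      fix n assume n: "n \<le> N"
      have "h = (rdiff (real q) ^^ (i - 1)) (rdiff (real q) (Pf a d))"
        unfolding h_def by (subst i1) (simp only: funpow_Suc_right comp_def)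
      moreover have "tnorm ((rdiff (real q) ^^ (i - 1)) (rdiff (real q) (Pf a d)) (real n))
          \<le> 2 ^ (i - 1) * \<eta>"
      proof (rule tnorm_iter[of "(2 * d + 1) * q"])
        show "\<And>m. m \<le> (2 * d + 1) * q \<Longrightarrow> tnorm (rdiff (real q) (Pf a d) (real m)) \<le> \<eta>"
          using hyp by simp
        have "(i - 1) * q \<le> d * q" unfolding i_def by simp
        then show "n + (i - 1) * q \<le> (2 * d + 1) * q" using n unfolding N_def by (simp add: algebra_simps)
      qed
      moreover have "(2::real) ^ (i - 1) \<le> 2 ^ d" unfolding i_def by (intro power_increasing) auto
      then have "(2::real) ^ (i - 1) * \<eta> \<le> 2 ^ d * \<eta>" using \<eta>0 by (intro mult_right_mono) auto
      ultimately show "tnorm (h (real n)) \<le> 2 ^ d * \<eta>" by simp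
    qed
    have hd: "2 ^ d * \<eta> \<le> snd (Cc j)"
    proof -
      have "\<eta> \<le> snd (Cc j) / 2 ^ d" using mj[OF jd] unfolding \<eta>_def by simp
      then show ?thesis by (simp add: field_simps)
    qed
    have jN: "j \<le> N" unfolding N_def using jd q1
      by (metis Suc_eq_plus1 le_trans less_imp_le_nat mult.right_neutral mult_le_mono2 le_add1)
    have L: "tnorm (fact j * (X / fact j)) * real N ^ j \<le> fst (Cc j) * (2 ^ d * \<eta>)"
      by (rule Cc(3)[OF ph hb hd jN])
    then have LX: "tnorm X * real N ^ j \<le> fst (Cc j) * (2 ^ d * \<eta>)" by simp
    have eq: "a d * real (d choose j) * real (fact d * q) ^ (d - j) = real (K j) * X"
    proof -
      have "d - j = Suc (d - j - 1)" using jd by simp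
      then have "real (fact d * q) ^ (d - j) = real Mn ^ (d - j - 1) * real Mn * real q ^ i"
        unfolding i_def Mn_def by (metis of_nat_mult power_Suc2 power_mult_distrib)
      then show ?thesis unfolding K_def X_def Mn_def by (simp add: mult_ac)
    qed
    have tK: "tnorm (a d * real (d choose j) * real (fact d * q) ^ (d - j)) \<le> real (K j) * tnorm X"
      unfolding eq by (rule tnorm_mult_nat)
    have rq: "(real r * real (fact d * q)) ^ j \<le> (real r * real Mn) ^ j * real N ^ j"
    proof -
      have "real q \<le> real N" unfolding N_def by simp
      then have "real r * real Mn * real q \<le> real r * real Mn * real N" by (intro mult_left_mono) auto
      then have "(real r * real Mn * real q) ^ j \<le> (real r * real Mn * real N) ^ j"
        by (intro power_mono) auto
      then show ?thesis unfolding Mn_def by (simp add: power_mult_distrib mult_ac)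
    qed
    have "tnorm (a d * real (d choose j) * real (fact d * q) ^ (d - j)) * (real r * real (fact d * q)) ^ j
        \<le> (real (K j) * tnorm X) * ((real r * real Mn) ^ j * real N ^ j)"
      using tK rq by (intro mult_mono) (auto simp: tnorm_nonneg)
    also have "\<dots> = real (K j) * (real r * real Mn) ^ j * (tnorm X * real N ^ j)" by (simp add: mult_ac)
    also have "\<dots> \<le> real (K j) * (real r * real Mn) ^ j * (fst (Cc j) * (2 ^ d * \<eta>))"
      using LX by (intro mult_left_mono) auto
    also have "\<dots> = (real (K j) * (real r * real Mn) ^ j * fst (Cc j) * 2 ^ d) * \<eta>" by (simp add: mult_ac)
    also have "\<dots> \<le> B * \<eta>"
    proof (intro mult_right_mono)
      show "real (K j) * (real r * real Mn) ^ j * fst (Cc j) * 2 ^ d \<le> B"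
        unfolding B_def using jd Cc(1)
        by (intro member_le_sum[where f = "\<lambda>j. real (K j) * (real r * real Mn) ^ j * fst (Cc j) * 2 ^ d"])
           (auto intro!: mult_nonneg_nonneg zero_le_power intro: less_imp_le)
    qed (use \<eta>0 in auto)
    also have "\<dots> \<le> \<epsilon>"
    proof -
      have "\<eta> \<le> \<epsilon> / (B + 1)" unfolding \<eta>_def by simp
      then have "\<eta> * (B + 1) \<le> \<epsilon>" using B0 by (simp add: pos_le_divide_eq)
      then show ?thesis using \<eta>0 by (simp add: algebra_simps)
    qed
    finally show "tnorm (a d * real (d choose j) * real (fact d * q) ^ (d - j)) * (real r * real (fact d * q)) ^ j \<le> \<epsilon>" .
  qed
  show ?thesis using \<eta>0 main by blast
qed

lemma Pf_Suc: "Pf a (Suc d) x = Pf a d x + a (Suc d) * x ^ Suc d"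
  unfolding Pf_def by simp

lemma mainS:
  assumes eps: "\<epsilon> > 0"
  shows "\<exists>R \<eta> M. R \<ge> 1 \<and> \<eta> > 0 \<and> M \<ge> 1 \<and> (\<forall>a q. q \<ge> 1 \<longrightarrow>
     (\<forall>n\<le>R * q. tnorm (rdiff (real q) (Pf a d) (real n)) \<le> \<eta>) \<longrightarrow>
     (\<forall>k\<le>d. G (a k) k (M * q) r \<epsilon>))"
proof (induction d)
  case 0
  show ?case
    by (intro exI[of _ 1] conjI) (auto simp: G_def)
next
  case (Suc d)
  obtain R2 \<eta>2 M2 where R2: "R2 \<ge> 1" and \<eta>2: "\<eta>2 > 0" and M2: "M2 \<ge> 1" and
    IH: "\<And>a q. q \<ge> 1 \<Longrightarrow> (\<forall>n\<le>R2 * q. tnorm (rdiff (real q) (Pf a d) (real n)) \<le> \<eta>2) \<Longrightarrow>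
     (\<forall>k\<le>d. G (a k) k (M2 * q) r \<epsilon>)"
    using Suc.IH by blast
  define D where "D = Suc d"
  define \<epsilon>t where "\<epsilon>t = min (\<epsilon> / real M2 ^ D) (\<eta>2 / (2 * real D))"
  have \<epsilon>t0: "\<epsilon>t > 0" unfolding \<epsilon>t_def D_def using eps \<eta>2 M2 by simp
  obtain \<eta>1 where \<eta>1: "\<eta>1 > 0" and TT1: "\<And>a q. q \<ge> 1 \<Longrightarrow>
     (\<forall>n\<le>(2 * D + 1) * q. tnorm (rdiff (real q) (Pf a D) (real n)) \<le> \<eta>1) \<Longrightarrow>
     G (a D) D (fact D * q) (max r R2) \<epsilon>t"
    using TT[OF \<epsilon>t0, of D "max r R2"] by blast
  define M1 :: nat where "M1 = fact D"
  have M1: "M1 \<ge> 1" unfolding M1_def by simp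
  define R where "R = M1 * (R2 + 1) + (2 * D + 1)"
  define \<eta> where "\<eta> = min \<eta>1 (\<eta>2 / (2 * real M1))"
  have \<eta>0: "\<eta> > 0" unfolding \<eta>_def using \<eta>1 \<eta>2 M1 by simp
  have main: "\<forall>k\<le>D. G (a k) k ((M2 * M1) * q) r \<epsilon>"
    if q1: "q \<ge> 1" and hyp: "\<forall>n\<le>R * q. tnorm (rdiff (real q) (Pf a D) (real n)) \<le> \<eta>" for a q
  proof -
    have "\<forall>n\<le>(2 * D + 1) * q. tnorm (rdiff (real q) (Pf a D) (real n)) \<le> \<eta>1"
    proof (intro allI impI)
      fix n assume n: "n \<le> (2 * D + 1) * q"
      have "(2 * D + 1) * q \<le> R * q" unfolding R_def by (intro mult_le_mono1) simp
      then have "tnorm (rdiff (real q) (Pf a D) (real n)) \<le> \<eta>" using hyp n by simp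
      then show "tnorm (rdiff (real q) (Pf a D) (real n)) \<le> \<eta>1" unfolding \<eta>_def by simp
    qed
    then have Gt: "G (a D) D (M1 * q) (max r R2) \<epsilon>t" unfolding M1_def by (rule TT1[OF q1])
    define q' where "q' = M1 * q"
    have q'1: "q' \<ge> 1" unfolding q'_def using M1 q1 by simp
    have low: "\<forall>n\<le>R2 * q'. tnorm (rdiff (real q') (Pf a d) (real n)) \<le> \<eta>2"
    proof (intro allI impI)
      fix n assume n: "n \<le> R2 * q'"
      have split: "rdiff (real q') (Pf a d) (real n) = rdiff (real q') (Pf a D) (real n)
          - (a D * (real n + real q') ^ D - a D * real n ^ D)"
        unfolding rdiff_def D_def Pf_Suc by simp
      have t1: "tnorm (rdiff (real q') (Pf a D) (real n)) \<le> real M1 * \<eta>"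
      proof -
        have "rdiff (real q') (Pf a D) (real n) = (\<Sum>i<M1. rdiff (real q) (Pf a D) (real n + real (i * q)))"
          unfolding q'_def by (rule tele)
        then have "tnorm (rdiff (real q') (Pf a D) (real n)) \<le> (\<Sum>i<M1. tnorm (rdiff (real q) (Pf a D) (real n + real (i * q))))"
          using tnorm_sum by simp
        also have "\<dots> \<le> (\<Sum>i<M1. \<eta>)"
        proof (rule sum_mono)
          fix i assume i: "i \<in> {..<M1}"
          have "i * q \<le> M1 * q" using i by simp
          moreover have "n \<le> R2 * M1 * q" using n unfolding q'_def by (simp add: mult_ac)
          moreover have "R * q = R2 * M1 * q + M1 * q + (2 * D + 1) * q" unfolding R_def by (simp add: algebra_simps)
          ultimately have "n + i * q \<le> R * q" by linarith
          then have "tnorm (rdiff (real q) (Pf a D) (real (n + i * q))) \<le> \<eta>" using hyp by blast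
          then show "tnorm (rdiff (real q) (Pf a D) (real n + real (i * q))) \<le> \<eta>" by simp
        qed
        also have "\<dots> = real M1 * \<eta>" by simp
        finally show ?thesis .
      qed
      have "real M1 * \<eta> \<le> real M1 * (\<eta>2 / (2 * real M1))" unfolding \<eta>_def by (intro mult_left_mono) auto
      also have "\<dots> = \<eta>2 / 2" using M1 by simp
      finally have t1': "tnorm (rdiff (real q') (Pf a D) (real n)) \<le> \<eta>2 / 2" using t1 by simp
      have GR2: "G (a D) D q' R2 \<epsilon>t" using Gt unfolding q'_def by (rule G_mono_r) simp
      have t2: "tnorm (a D * (real n + real q') ^ D - a D * real n ^ D) \<le> real D * \<epsilon>t"
        by (rule G_expand[OF GR2 n])
      have "real D * \<epsilon>t \<le> real D * (\<eta>2 / (2 * real D))" unfolding \<epsilon>t_def by (intro mult_left_mono) auto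
      also have "\<dots> = \<eta>2 / 2"
      proof -
        have "real D > 0" unfolding D_def by simp
        then show ?thesis by (simp add: field_simps)
      qed
      finally have t2': "tnorm (a D * (real n + real q') ^ D - a D * real n ^ D) \<le> \<eta>2 / 2" using t2 by simp
      have "tnorm (rdiff (real q') (Pf a d) (real n)) \<le> tnorm (rdiff (real q') (Pf a D) (real n))
          + tnorm (a D * (real n + real q') ^ D - a D * real n ^ D)"
        unfolding split by (rule tnorm_diff)
      then show "tnorm (rdiff (real q') (Pf a d) (real n)) \<le> \<eta>2" using t1' t2' by simp
    qed
    have lowG: "\<forall>k\<le>d. G (a k) k (M2 * q') r \<epsilon>" by (rule IH[OF q'1 low])
    have "G (a D) D q' r \<epsilon>t" using Gt unfolding q'_def by (rule G_mono_r) simp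
    then have "G (a D) D (M2 * q') r (real M2 ^ D * \<epsilon>t)" by (rule G_mult)
    moreover have "real M2 ^ D * \<epsilon>t \<le> \<epsilon>"
    proof -
      have "\<epsilon>t \<le> \<epsilon> / real M2 ^ D" unfolding \<epsilon>t_def by simp
      then show ?thesis using M2 by (simp add: field_simps)
    qed
    ultimately have topG: "G (a D) D (M2 * q') r \<epsilon>" by (rule G_mono_eps)
    show ?thesis
    proof (intro allI impI)
      fix k assume k: "k \<le> D"
      have mq: "M2 * M1 * q = M2 * q'" unfolding q'_def by simp
      show "G (a k) k (M2 * M1 * q) r \<epsilon>"
      proof (cases "k = D")
        case True then show ?thesis using topG unfolding mq by simp
      next
        case False then have "k \<le> d" using k unfolding D_def by simp
        then show ?thesis using lowG unfolding mq by simp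
      qed
    qed
  qed
  have "R \<ge> 1" unfolding R_def by simp
  moreover have "M2 * M1 \<ge> 1" using M1 M2 by simp
  ultimately show ?case using \<eta>0 main unfolding D_def by blast
qed

lemma sum_eq_Pf: "(\<Sum>k=0..d. a k * real n ^ k) = Pf a d (real n)"
  unfolding Pf_def by (simp add: atLeast0AtMost)

lemma joint_intro:
  assumes "\<And>(\<epsilon>::real) (r::nat). \<epsilon> > 0 \<Longrightarrow> r \<ge> 1 \<Longrightarrow> \<exists>q::nat. q \<ge> 1 \<and> (\<forall>i\<in>I. \<forall>n\<in>{0..r*q}. tdist (w i n) (w i (n + q)) < \<epsilon>)"
  shows "joint_repetition_property I w"
  unfolding joint_repetition_property_def repetition_property_def
proof (intro conjI ballI allI impI)
  fix i and \<epsilon> :: real and r :: nat assume "i \<in> I" "\<epsilon> > 0" "r \<ge> 1"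
  then show "\<exists>q. 1 \<le> q \<and> (\<forall>n\<in>{0..r * q}. tdist (w i n) (w i (n + q)) < \<epsilon>)"
    using assms by blast
next
  fix F and \<epsilon> :: real and r :: nat assume "F \<subseteq> I" "\<epsilon> > 0" "r \<ge> 1"
  then show "\<exists>q. 1 \<le> q \<and> (\<forall>i\<in>F. \<forall>n\<in>{0..r * q}. tdist (w i n) (w i (n + q)) < \<epsilon>)"
    using assms by (meson subsetD)
qed

theorem theorem3p4:
  fixes a :: "nat \<Rightarrow> real" and d :: nat
  shows "repetition_property (\<lambda>n. \<Sum>k=0..d. a k * real n ^ k) \<longleftrightarrow>
         joint_repetition_property {0..d} (\<lambda>k n. a k * real n ^ k)"
proof
  assume rp: "repetition_property (\<lambda>n. \<Sum>k=0..d. a k * real n ^ k)"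
  show "joint_repetition_property {0..d} (\<lambda>k n. a k * real n ^ k)"
  proof (rule joint_intro)
    fix \<epsilon> :: real and r :: nat assume eps: "\<epsilon> > 0" and r1: "r \<ge> 1"
    define \<epsilon>' where "\<epsilon>' = \<epsilon> / (2 * (real d + 1))"
    have \<epsilon>'0: "\<epsilon>' > 0" unfolding \<epsilon>'_def using eps by simp
    obtain R \<eta> M where R: "R \<ge> 1" and \<eta>: "\<eta> > 0" and M: "M \<ge> 1" and
      S: "\<And>a' q. q \<ge> 1 \<Longrightarrow> (\<forall>n\<le>R * q. tnorm (rdiff (real q) (Pf a' d) (real n)) \<le> \<eta>) \<Longrightarrow>
        (\<forall>k\<le>d. G (a' k) k (M * q) r \<epsilon>')"
      using mainS[OF \<epsilon>'0, of d r] by blast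
    obtain q where q1: "q \<ge> 1" and
      hq: "\<forall>n\<in>{0..R * q}. tdist (\<Sum>k=0..d. a k * real n ^ k) (\<Sum>k=0..d. a k * real (n + q) ^ k) < \<eta>"
      using rp \<eta> R unfolding repetition_property_def by blast
    have "\<forall>n\<le>R * q. tnorm (rdiff (real q) (Pf a d) (real n)) \<le> \<eta>"
    proof (intro allI impI)
      fix n assume n: "n \<le> R * q"
      have "tdist (Pf a d (real n)) (Pf a d (real (n + q))) < \<eta>"
        using hq n unfolding sum_eq_Pf by simp
      then have "tnorm (Pf a d (real n) - Pf a d (real n + real q)) < \<eta>" unfolding tdist_def by simp
      then show "tnorm (rdiff (real q) (Pf a d) (real n)) \<le> \<eta>"
        unfolding rdiff_def using tnorm_commute by (simp add: less_imp_le)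
    qed
    then have GG: "\<forall>k\<le>d. G (a k) k (M * q) r \<epsilon>'" by (rule S[OF q1])
    show "\<exists>q. q \<ge> 1 \<and> (\<forall>i\<in>{0..d}. \<forall>n\<in>{0..r * q}. tdist (a i * real n ^ i) (a i * real (n + q) ^ i) < \<epsilon>)"
    proof (intro exI conjI ballI)
      show "M * q \<ge> 1" using M q1 by simp
      fix k n assume k: "k \<in> {0..d}" and n: "n \<in> {0..r * (M * q)}"
      have "tnorm (a k * (real n + real (M * q)) ^ k - a k * real n ^ k) \<le> real k * \<epsilon>'"
        using G_expand[of "a k" k "M * q" r \<epsilon>' n] GG k n by simp
      also have "\<dots> < \<epsilon>"
      proof -
        have "real k * \<epsilon>' \<le> real d * \<epsilon>'" using k \<epsilon>'0 by (intro mult_right_mono) auto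
        also have "\<dots> < \<epsilon>"
        proof -
          have pos: "0 < \<epsilon> * real d + \<epsilon> * 2" using eps by (simp add: add_nonneg_pos)
          show ?thesis unfolding \<epsilon>'_def using eps pos by (simp add: field_simps)
        qed
        finally show ?thesis .
      qed
      finally have "tnorm (a k * (real n + real (M * q)) ^ k - a k * real n ^ k) < \<epsilon>" .
      then show "tdist (a k * real n ^ k) (a k * real (n + M * q) ^ k) < \<epsilon>"
        unfolding tdist_def using tnorm_commute by simp
    qed
  qed
next
  assume jp: "joint_repetition_property {0..d} (\<lambda>k n. a k * real n ^ k)"
  show "repetition_property (\<lambda>n. \<Sum>k=0..d. a k * real n ^ k)"
    unfolding repetition_property_def
  proof (intro allI impI)
    fix \<epsilon> :: real and r :: nat assume eps: "\<epsilon> > 0" and r1: "r \<ge> 1"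
    have "\<epsilon> / (real d + 1) > 0" using eps by simp
    then obtain q where q1: "q \<ge> 1" and
      hq: "\<forall>i\<in>{0..d}. \<forall>n\<in>{0..r * q}. tdist (a i * real n ^ i) (a i * real (n + q) ^ i) < \<epsilon> / (real d + 1)"
      using jp r1 unfolding joint_repetition_property_def by (meson finite_atLeastAtMost order_refl)
    show "\<exists>q. 1 \<le> q \<and> (\<forall>n\<in>{0..r * q}. tdist (\<Sum>k=0..d. a k * real n ^ k) (\<Sum>k=0..d. a k * real (n + q) ^ k) < \<epsilon>)"
    proof (intro exI conjI ballI)
      show "1 \<le> q" by (rule q1)
      fix n assume n: "n \<in> {0..r * q}"
      have "tdist (\<Sum>k=0..d. a k * real n ^ k) (\<Sum>k=0..d. a k * real (n + q) ^ k)
          = tnorm (\<Sum>k=0..d. a k * real n ^ k - a k * real (n + q) ^ k)"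
        unfolding tdist_def by (simp add: sum_subtractf)
      also have "\<dots> \<le> (\<Sum>k=0..d. tnorm (a k * real n ^ k - a k * real (n + q) ^ k))"
        by (rule tnorm_sum)
      also have "\<dots> < (\<Sum>k=0..d. \<epsilon> / (real d + 1))"
        using hq n unfolding tdist_def by (intro sum_strict_mono) auto
      also have "\<dots> = \<epsilon>" by (simp add: field_simps)
      finally show "tdist (\<Sum>k=0..d. a k * real n ^ k) (\<Sum>k=0..d. a k * real (n + q) ^ k) < \<epsilon>" .
    qed
  qed
qed

end
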